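(* Let $\langle X,d\rangle$ be a metric space. The following are equivalent: (1) $X$ is cofinally Bourbaki quasi-complete; (2) $X$ is cofinally Bourbaki complete and every CBC-regular function from $X$ to any metric space $Y$ maps cofinally Bourbaki quasi-Cauchy sequences to cofinally Bourbaki-Cauchy sequences; (3) $X$ is cofinally Bourbaki complete and every real-valued CBC-regular function on $X$ maps cofinally Bourbaki quasi-Cauchy sequences to cofinally Bourbaki-Cauchy sequences; (4) $X$ is cofinally Bourbaki complete and every cofinally Bourbaki quasi-Cauchy sequence in $X$ is cofinally Bourbaki-Cauchy.
   Context: For $\varepsilon>0$, an $\varepsilon$-chain joining $x,y$ is a finite sequence $x=x_0,\dots,x_n=y$ with consecutive distances $<\varepsilon$. A sequence $\langle x_n\rangle$ is cofinally Bourbaki quasi-Cauchy if for every $\varepsilon>0$ there is an infinite $N_\varepsilon\subseteq\mathbb{N}$ such that any $x_j,x_k$ with $j,k\in N_\varepsilon$ can be joined by an $\varepsilon$-chain; $X$ is cofinally Bourbaki quasi-complete if every such sequence has a cluster point. In a metric space $\langle Y,\rho\rangle$ let $S^1_\rho(p,\varepsilon)$ be the open $\varepsilon$-ball about $p$ and $S^{m}_\rho(p,\varepsilon)=\{y:\rho(y,S^{m-1}_\rho(p,\varepsilon))<\varepsilon\}$; a sequence $\langle y_n\rangle$ is cofinally Bourbaki-Cauchy if for every $\varepsilon>0$ there exist an infinite $N_\varepsilon\subseteq\mathbb{N}$, $m\in\mathbb{N}$, $p\in Y$ with $y_n\in S^m_\rho(p,\varepsilon)$ for all $n\in N_\varepsilon$.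 A space is cofinally Bourbaki complete if every cofinally Bourbaki-Cauchy sequence has a cluster point. A function between metric spaces is CBC-regular if it maps cofinally Bourbaki-Cauchy sequences to cofinally Bourbaki-Cauchy sequences. *)

theory Defs
  imports "HOL-Analysis.Analysis"
begin

text \<open>Metric spaces are given as a carrier M with a distance d satisfying
  the library predicate Metric_space M d.\<close>

definition eps_chain :: "'a set \<Rightarrow> ('a \<Rightarrow> 'a \<Rightarrow> real) \<Rightarrow> real \<Rightarrow> 'a \<Rightarrow> 'a \<Rightarrow> bool" where
  "eps_chain M d e x y \<longleftrightarrow>
     (\<exists>xs. xs \<noteq> [] \<and> hd xs = x \<and> last xs = y \<and> set xs \<subseteq> M \<and>
           (\<forall>i. Suc i < length xs \<longrightarrow> d (xs ! i) (xs ! Suc i) < e))"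

definition cofinally_Bourbaki_quasi_Cauchy :: "'a set \<Rightarrow> ('a \<Rightarrow> 'a \<Rightarrow> real) \<Rightarrow> (nat \<Rightarrow> 'a) \<Rightarrow> bool" where
  "cofinally_Bourbaki_quasi_Cauchy M d s \<longleftrightarrow> range s \<subseteq> M \<and>
     (\<forall>e>0. \<exists>N::nat set. infinite N \<and> (\<forall>j\<in>N. \<forall>k\<in>N. eps_chain M d e (s j) (s k)))"

definition seq_cluster_point :: "'a set \<Rightarrow> ('a \<Rightarrow> 'a \<Rightarrow> real) \<Rightarrow> (nat \<Rightarrow> 'a) \<Rightarrow> 'a \<Rightarrow> bool" where
  "seq_cluster_point M d s p \<longleftrightarrow> p \<in> M \<and> (\<forall>e>0. infinite {n. d (s n) p < e})"

definition cofinally_Bourbaki_quasi_complete :: "'a set \<Rightarrow> ('a \<Rightarrow> 'a \<Rightarrow> real) \<Rightarrow> bool" where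
  "cofinally_Bourbaki_quasi_complete M d \<longleftrightarrow>
     (\<forall>s. cofinally_Bourbaki_quasi_Cauchy M d s \<longrightarrow> (\<exists>p. seq_cluster_point M d s p))"

text \<open>Siter M d p e m is S^m(p,e); Siter 0 = {p}, so Siter 1 is the open e-ball.\<close>
primrec Siter :: "'a set \<Rightarrow> ('a \<Rightarrow> 'a \<Rightarrow> real) \<Rightarrow> 'a \<Rightarrow> real \<Rightarrow> nat \<Rightarrow> 'a set" where
  "Siter M d p e 0 = {p}"
| "Siter M d p e (Suc m) = {y \<in> M. \<exists>z \<in> Siter M d p e m. d y z < e}"

definition cofinally_Bourbaki_Cauchy :: "'a set \<Rightarrow> ('a \<Rightarrow> 'a \<Rightarrow> real) \<Rightarrow> (nat \<Rightarrow> 'a) \<Rightarrow> bool" where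
  "cofinally_Bourbaki_Cauchy M d s \<longleftrightarrow> range s \<subseteq> M \<and>
     (\<forall>e>0. \<exists>N::nat set. \<exists>m::nat. \<exists>p\<in>M. infinite N \<and> m \<ge> 1 \<and>
         (\<forall>n\<in>N. s n \<in> Siter M d p e m))"

definition cofinally_Bourbaki_complete :: "'a set \<Rightarrow> ('a \<Rightarrow> 'a \<Rightarrow> real) \<Rightarrow> bool" where
  "cofinally_Bourbaki_complete M d \<longleftrightarrow>
     (\<forall>s. cofinally_Bourbaki_Cauchy M d s \<longrightarrow> (\<exists>p. seq_cluster_point M d s p))"

definition CBC_regular :: "'a set \<Rightarrow> ('a \<Rightarrow> 'a \<Rightarrow> real) \<Rightarrow> 'b set \<Rightarrow> ('b \<Rightarrow> 'b \<Rightarrow> real) \<Rightarrow> ('a \<Rightarrow> 'b) \<Rightarrow> bool" where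
  "CBC_regular M d Y dY f \<longleftrightarrow> f ` M \<subseteq> Y \<and>
     (\<forall>s. cofinally_Bourbaki_Cauchy M d s \<longrightarrow> cofinally_Bourbaki_Cauchy Y dY (f \<circ> s))"

text \<open>Condition (2), with the target spaces ranging over metric spaces whose points have type 'b.\<close>
definition cond2 :: "'b itself \<Rightarrow> 'a set \<Rightarrow> ('a \<Rightarrow> 'a \<Rightarrow> real) \<Rightarrow> bool" where
  "cond2 _ X d \<longleftrightarrow> cofinally_Bourbaki_complete X d \<and>
     (\<forall>(Y::'b set) dY (f::'a \<Rightarrow> 'b). Metric_space Y dY \<and> CBC_regular X d Y dY f \<longrightarrow>
        (\<forall>s. cofinally_Bourbaki_quasi_Cauchy X d s \<longrightarrow> cofinally_Bourbaki_Cauchy Y dY (f \<circ> s)))"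

end

theory Submission
  imports Defs
begin

lemma chain_refl: "x \<in> M \<Longrightarrow> eps_chain M d e x x"
  unfolding eps_chain_def by (rule exI[of _ "[x]"]) auto

lemma chain_cons:
  assumes "y \<in> M" "d y z < e" "eps_chain M d e z w"
  shows "eps_chain M d e y w"
proof -
  obtain xs where xs: "xs \<noteq> []" "hd xs = z" "last xs = w" "set xs \<subseteq> M"
    "\<forall>i. Suc i < length xs \<longrightarrow> d (xs ! i) (xs ! Suc i) < e"
    using assms(3) unfolding eps_chain_def by blast
  have "\<forall>i. Suc i < length (y # xs) \<longrightarrow> d ((y#xs) ! i) ((y#xs) ! Suc i) < e"
  proof (intro allI impI)
    fix i assume "Suc i < length (y # xs)"
    then show "d ((y#xs) ! i) ((y#xs) ! Suc i) < e"
      using xs assms(2) by (cases i) (auto simp: hd_conv_nth)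
  qed
  then show ?thesis unfolding eps_chain_def using xs assms(1)
    by (intro exI[of _ "y # xs"]) auto
qed

lemma chain_trans_aux:
  "\<lbrakk>xs \<noteq> []; hd xs = x; last xs = y; set xs \<subseteq> M;
    \<forall>i. Suc i < length xs \<longrightarrow> d (xs ! i) (xs ! Suc i) < e; eps_chain M d e y w\<rbrakk>
   \<Longrightarrow> eps_chain M d e x w"
proof (induction xs arbitrary: x)
  case Nil then show ?case by simp
next
  case (Cons a xs)
  show ?case
  proof (cases xs)
    case Nil then show ?thesis using Cons.prems by simp
  next
    case (Cons b ys)
    have h: "\<forall>i. Suc i < length xs \<longrightarrow> d (xs ! i) (xs ! Suc i) < e"
    proof (intro allI impI)
      fix i assume "Suc i < length xs"
      then show "d (xs ! i) (xs ! Suc i) < e"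
        using Cons.prems(5)[rule_format, of "Suc i"] by simp
    qed
    have "eps_chain M d e b w"
      using Cons.IH[of b] Cons.prems h Cons by auto
    moreover have "d a b < e" using Cons.prems(5)[rule_format, of 0] Cons by simp
    ultimately show ?thesis using chain_cons[of a M d b e w] Cons.prems by auto
  qed
qed

lemma chain_trans: "eps_chain M d e x y \<Longrightarrow> eps_chain M d e y w \<Longrightarrow> eps_chain M d e x w"
proof -
  assume a: "eps_chain M d e x y" and b: "eps_chain M d e y w"
  obtain xs where xs: "xs \<noteq> []" "hd xs = x" "last xs = y" "set xs \<subseteq> M"
    "\<forall>i. Suc i < length xs \<longrightarrow> d (xs ! i) (xs ! Suc i) < e"
    using a unfolding eps_chain_def by blast
  show ?thesis by (rule chain_trans_aux[OF xs b])
qed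

lemma chain_sym:
  assumes "Metric_space M d" "eps_chain M d e x y"
  shows "eps_chain M d e y x"
proof -
  obtain xs where xs: "xs \<noteq> []" "hd xs = x" "last xs = y" "set xs \<subseteq> M"
    "\<forall>i. Suc i < length xs \<longrightarrow> d (xs ! i) (xs ! Suc i) < e"
    using assms(2) unfolding eps_chain_def by blast
  have "\<forall>i. Suc i < length (rev xs) \<longrightarrow> d (rev xs ! i) (rev xs ! Suc i) < e"
  proof (intro allI impI)
    fix i assume i: "Suc i < length (rev xs)"
    define j where "j = length xs - Suc (Suc i)"
    have "Suc j < length xs" "length xs - Suc i = Suc j" using i unfolding j_def by auto
    then have "rev xs ! i = xs ! Suc j" "rev xs ! Suc i = xs ! j"
      using i by (auto simp: rev_nth j_def)
    moreover have "d (xs ! j) (xs ! Suc j) < e" using xs(5) \<open>Suc j < length xs\<close> by blast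
    ultimately show "d (rev xs ! i) (rev xs ! Suc i) < e"
      using Metric_space.commute[OF assms(1), of "xs ! j" "xs ! Suc j"] by simp
  qed
  then show ?thesis unfolding eps_chain_def using xs
    by (intro exI[of _ "rev xs"]) (auto simp: hd_rev last_rev)
qed

lemma Siter_chain:
  "p \<in> M \<Longrightarrow> y \<in> Siter M d p e m \<Longrightarrow> eps_chain M d e y p"
proof (induction m arbitrary: y)
  case 0 then show ?case by (simp add: chain_refl)
next
  case (Suc m)
  then obtain z where z: "y \<in> M" "z \<in> Siter M d p e m" "d y z < e" by auto
  have "eps_chain M d e z p" using Suc.IH[OF Suc.prems(1) z(2)] .
  then show ?case using chain_cons[of y M d z e p] z by blast
qed

lemma CBC_imp_CBQC:
  assumes "Metric_space M d" "cofinally_Bourbaki_Cauchy M d s"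
  shows "cofinally_Bourbaki_quasi_Cauchy M d s"
  unfolding cofinally_Bourbaki_quasi_Cauchy_def
proof (intro conjI allI impI)
  show "range s \<subseteq> M" using assms(2) unfolding cofinally_Bourbaki_Cauchy_def by blast
  fix e :: real assume "e > 0"
  then obtain N m p where N: "p \<in> M" "infinite N" "\<forall>n\<in>N. s n \<in> Siter M d p e m"
    using assms(2) unfolding cofinally_Bourbaki_Cauchy_def by blast
  have "\<forall>j\<in>N. \<forall>k\<in>N. eps_chain M d e (s j) (s k)"
  proof (intro ballI)
    fix j k assume jk: "j \<in> N" "k \<in> N"
    have a: "eps_chain M d e (s j) p" using Siter_chain[OF N(1)] N(3) jk(1) by blast
    have b: "eps_chain M d e (s k) p" using Siter_chain[OF N(1)] N(3) jk(2) by blast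
    show "eps_chain M d e (s j) (s k)"
      by (rule chain_trans[OF a chain_sym[OF assms(1) b]])
  qed
  then show "\<exists>N. infinite N \<and> (\<forall>j\<in>N. \<forall>k\<in>N. eps_chain M d e (s j) (s k))"
    using N by blast
qed

lemma QC_imp_complete:
  assumes "Metric_space X d" "cofinally_Bourbaki_quasi_complete X d"
  shows "cofinally_Bourbaki_complete X d"
  unfolding cofinally_Bourbaki_complete_def
proof (intro allI impI)
  fix s assume "cofinally_Bourbaki_Cauchy X d s"
  then have "cofinally_Bourbaki_quasi_Cauchy X d s" by (rule CBC_imp_CBQC[OF assms(1)])
  then show "\<exists>p. seq_cluster_point X d s p"
    using assms(2) unfolding cofinally_Bourbaki_quasi_complete_def by simp
qed

lemma cluster_imp_CBC:
  assumes "range s \<subseteq> M" "seq_cluster_point M d s p"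
  shows "cofinally_Bourbaki_Cauchy M d s"
  unfolding cofinally_Bourbaki_Cauchy_def
proof (intro conjI allI impI)
  show "range s \<subseteq> M" by fact
  fix e :: real assume "e > 0"
  then have "p \<in> M" "infinite {n. d (s n) p < e}" using assms(2)
    unfolding seq_cluster_point_def by auto
  moreover have "\<forall>n\<in>{n. d (s n) p < e}. s n \<in> Siter M d p e 1"
    using assms(1) by auto
  ultimately show "\<exists>N m. \<exists>p\<in>M. infinite N \<and> 1 \<le> m \<and> (\<forall>n\<in>N. s n \<in> Siter M d p e m)"
    by (intro exI[of _ "{n. d (s n) p < e}"] exI[of _ "1::nat"] bexI[of _ p]) simp_all
qed

lemma QC_imp_4:
  assumes "cofinally_Bourbaki_quasi_complete X d" "cofinally_Bourbaki_quasi_Cauchy X d s"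
  shows "cofinally_Bourbaki_Cauchy X d s"
proof -
  obtain p where p: "seq_cluster_point X d s p"
    using assms unfolding cofinally_Bourbaki_quasi_complete_def by blast
  have "range s \<subseteq> X" using assms(2) unfolding cofinally_Bourbaki_quasi_Cauchy_def by simp
  then show ?thesis using p by (rule cluster_imp_CBC)
qed

lemma Siter_real_upper:
  "y \<in> Siter UNIV dist (p::real) e m \<Longrightarrow> \<bar>y - p\<bar> \<le> real m * e"
proof (induction m arbitrary: y)
  case 0 then show ?case by simp
next
  case (Suc m)
  then obtain z where z: "z \<in> Siter UNIV dist p e m" "dist y z < e" by auto
  have "\<bar>z - p\<bar> \<le> real m * e" using z(1) by (rule Suc.IH)
  with z(2) show ?case by (simp add: dist_real_def algebra_simps)
qed

lemma Siter_real_lower: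
  "\<bar>y - p\<bar> < real (Suc m) * e \<Longrightarrow> (y::real) \<in> Siter UNIV dist p e (Suc m)"
proof (induction m arbitrary: y)
  case 0 then show ?case by (simp add: dist_real_def)
next
  case (Suc m)
  define z where "z = p + (y - p) * (real m + 1) / (real m + 2)"
  have zp: "z - p = (y - p) * (real m + 1) / (real m + 2)" unfolding z_def by simp
  have yz: "y - z = (y - p) / (real m + 2)" unfolding z_def by (simp add: field_simps)
  have "real (Suc (Suc m)) = real m + 2" by simp
  then have "\<bar>y - p\<bar> < (real m + 2) * e" using Suc.prems by metis
  have "\<bar>z - p\<bar> = \<bar>y - p\<bar> * ((real m + 1) / (real m + 2))"
    unfolding zp by (simp add: abs_mult)
  also have "\<dots> < (real m + 2) * e * ((real m + 1) / (real m + 2))"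
    using \<open>\<bar>y - p\<bar> < (real m + 2) * e\<close> by (rule mult_strict_right_mono) simp
  also have "\<dots> = real (Suc m) * e" by simp
  finally have "\<bar>z - p\<bar> < real (Suc m) * e" .
  then have "z \<in> Siter UNIV dist p e (Suc m)" by (rule Suc.IH)
  moreover have "dist y z < e" using \<open>\<bar>y - p\<bar> < (real m + 2) * e\<close>
    unfolding dist_real_def yz by (simp add: field_simps)
  ultimately show ?case by auto
qed

lemma hard_dir:
  fixes X :: "'a set" and d :: "'a \<Rightarrow> 'a \<Rightarrow> real"
  assumes ms: "Metric_space X d" and cpl: "cofinally_Bourbaki_complete X d"
    and H: "\<forall>f::'a \<Rightarrow> real. CBC_regular X d UNIV dist f \<longrightarrow>
                (\<forall>s. cofinally_Bourbaki_quasi_Cauchy X d s \<longrightarrow>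
                       cofinally_Bourbaki_Cauchy UNIV dist (f \<circ> s))"
  shows "cofinally_Bourbaki_quasi_complete X d"
  unfolding cofinally_Bourbaki_quasi_complete_def
proof (intro allI impI)
  fix s assume sQ: "cofinally_Bourbaki_quasi_Cauchy X d s"
  then have sX: "\<And>n. s n \<in> X" unfolding cofinally_Bourbaki_quasi_Cauchy_def by auto
  show "\<exists>p. seq_cluster_point X d s p"
  proof (rule ccontr)
    assume nc: "\<not> (\<exists>p. seq_cluster_point X d s p)"
    define g where "g x n = d x (s n) + 1 / (real n + 1)" for x n
    define h where "h x = Inf (range (g x))" for x
    define f where "f x = 1 / h x" for x
    have gpos: "g x n > 0" for x n
    proof -
      have "0 \<le> d x (s n)" by (rule Metric_space.nonneg[OF ms])
      moreover have "1 / (real n + 1) > 0" by simp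
      ultimately show ?thesis unfolding g_def by linarith
    qed
    have bdd: "bdd_below (range (g x))" for x
      using gpos by (meson bdd_belowI2 less_imp_le)
    have cbound: "\<exists>c>0. \<forall>n. g q n \<ge> c" if "q \<in> X" for q
    proof -
      from nc that obtain \<epsilon> where eps: "\<epsilon> > 0" "finite {n. d (s n) q < \<epsilon>}"
        unfolding seq_cluster_point_def by auto
      then obtain K where K: "\<forall>n\<in>{n. d (s n) q < \<epsilon>}. n < K"
        using finite_nat_bounded by (meson lessThan_iff subset_eq)
      define c where "c = min \<epsilon> (1 / (real K + 1))"
      have "g q n \<ge> c" for n
      proof (cases "d (s n) q < \<epsilon>")
        case True
        then have "n < K" using K by auto
        then have "1 / (real K + 1) \<le> 1 / (real n + 1)"
          by (simp add: frac_le)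
        then show ?thesis unfolding g_def c_def using Metric_space.nonneg[OF ms, of q "s n"] by linarith
      next
        case False
        then have "d q (s n) \<ge> \<epsilon>" using Metric_space.commute[OF ms, of q "s n"] by simp
        moreover have "1 / (real n + 1) > 0" by simp
        ultimately show ?thesis unfolding g_def c_def by linarith
      qed
      moreover have "c > 0" unfolding c_def using eps by simp
      ultimately show ?thesis by blast
    qed
    have hs: "h (s n) \<le> 1 / (real n + 1)" for n
    proof -
      have "h (s n) \<le> g (s n) n" unfolding h_def by (rule cInf_lower[OF _ bdd]) auto
      also have "\<dots> = 1 / (real n + 1)" unfolding g_def using ms sX
        by (simp add: Metric_space.zero)
      finally show ?thesis .
    qed
    have hpos: "h x > 0" if xX: "x \<in> X" for x
    proof -
      obtain c where "c > 0" "\<forall>n. g x n \<ge> c" using cbound[OF xX] by blast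
      then have "h x \<ge> c" unfolding h_def by (intro cInf_greatest) auto
      with \<open>c > 0\<close> show ?thesis by simp
    qed
    have fs: "f (s n) \<ge> real n + 1" for n
    proof -
      have "0 < h (s n)" using hpos sX by auto
      have "(real n + 1) * h (s n) \<le> (real n + 1) * (1 / (real n + 1))"
        by (rule mult_left_mono[OF hs]) simp
      then have "(real n + 1) * h (s n) \<le> 1" by simp
      with \<open>0 < h (s n)\<close> show ?thesis unfolding f_def by (simp add: le_divide_eq)
    qed
    have reg: "CBC_regular X d UNIV dist f"
      unfolding CBC_regular_def
    proof (intro conjI allI impI)
      show "f ` X \<subseteq> UNIV" by simp
      fix t assume tC: "cofinally_Bourbaki_Cauchy X d t"
      then have tX: "\<And>n. t n \<in> X" unfolding cofinally_Bourbaki_Cauchy_def by auto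
      obtain q where q: "seq_cluster_point X d t q" using cpl tC
        unfolding cofinally_Bourbaki_complete_def by blast
      then have qX: "q \<in> X" unfolding seq_cluster_point_def by auto
      obtain c where c: "c > 0" "\<forall>n. g q n \<ge> c" using cbound[OF qX] by blast
      define N where "N = {n. d (t n) q < c / 2}"
      have "c / 2 > 0" using c by simp
      then have Ninf: "infinite N" using q unfolding N_def seq_cluster_point_def
        by blast
      have fb: "\<bar>f (t n)\<bar> \<le> 2 / c" if "n \<in> N" for n
      proof -
        have "g (t n) k \<ge> c / 2" for k
        proof -
          have "d q (s k) \<le> d q (t n) + d (t n) (s k)"
            using Metric_space.triangle[OF ms] qX tX sX by blast
          moreover have "d q (t n) < c / 2" using that Metric_space.commute[OF ms, of q "t n"]
            unfolding N_def by simp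
          ultimately show ?thesis using c(2)[rule_format, of k] unfolding g_def by linarith
        qed
        then have h1: "h (t n) \<ge> c / 2" unfolding h_def by (intro cInf_greatest) auto
        then have "f (t n) \<le> 2 / c" "f (t n) > 0" unfolding f_def using c
          by (auto simp: field_simps)
        then show ?thesis by simp
      qed
      show "cofinally_Bourbaki_Cauchy UNIV dist (f \<circ> t)"
        unfolding cofinally_Bourbaki_Cauchy_def
      proof (intro conjI allI impI)
        show "range (f \<circ> t) \<subseteq> UNIV" by simp
        fix e :: real assume e: "e > 0"
        obtain m where m: "real m > 2 / c / e" using reals_Archimedean2 by blast
        have "2 / c / e * e < real m * e" using m e by (intro mult_strict_right_mono)
        then have "2 / c < real m * e" using e by simp
        then have "\<forall>n\<in>N. (f \<circ> t) n \<in> Siter UNIV dist 0 e (Suc m)"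
          using fb e by (intro ballI Siter_real_lower) (fastforce simp: algebra_simps)
        then show "\<exists>N m. \<exists>p\<in>UNIV. infinite N \<and> 1 \<le> m \<and>
            (\<forall>n\<in>N. (f \<circ> t) n \<in> Siter UNIV dist p e m)"
          using Ninf by (intro exI[of _ N] exI[of _ "Suc m"] bexI[of _ 0]) auto
      qed
    qed
    have "cofinally_Bourbaki_Cauchy UNIV dist (f \<circ> s)" using H reg sQ by blast
    then have "\<exists>N m. \<exists>p\<in>UNIV. infinite N \<and> 1 \<le> m \<and> (\<forall>n\<in>N. (f \<circ> s) n \<in> Siter UNIV dist p 1 m)"
      unfolding cofinally_Bourbaki_Cauchy_def using zero_less_one by blast
    then obtain N m p where N: "infinite N" "\<forall>n\<in>N. f (s n) \<in> Siter UNIV dist p 1 m"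
      by auto
    obtain K :: nat where K: "real K > \<bar>p\<bar> + real m" using reals_Archimedean2 by blast
    obtain n where n0: "n > K" "n \<in> N"
      using N(1) unfolding infinite_nat_iff_unbounded by blast
    then have n: "n \<in> N" "real n > \<bar>p\<bar> + real m" using K by auto
    have "\<bar>f (s n) - p\<bar> \<le> real m" using Siter_real_upper[OF N(2)[rule_format, OF n(1)]] by simp
    with fs[of n] n(2) show False by linarith
  qed
qed

lemma QC_imp_cond2:
  assumes ms: "Metric_space X d"
  shows "cofinally_Bourbaki_quasi_complete X d \<longrightarrow> cond2 TYPE('b) X d"
proof
  assume Q: "cofinally_Bourbaki_quasi_complete X d"
  have A: "cofinally_Bourbaki_complete X d" by (rule QC_imp_complete[OF ms Q])
  have B: "cofinally_Bourbaki_Cauchy Y dY (f \<circ> s)"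
    if "CBC_regular X d Y dY f" "cofinally_Bourbaki_quasi_Cauchy X d s"
    for Y :: "'b set" and dY f s
  proof -
    have "cofinally_Bourbaki_Cauchy X d s" by (rule QC_imp_4[OF Q that(2)])
    then show ?thesis using that(1) unfolding CBC_regular_def by blast
  qed
  show "cond2 TYPE('b) X d" unfolding cond2_def using A B by blast
qed

lemma cond2_real_imp3:
  assumes "cond2 TYPE(real) X d"
  shows "cofinally_Bourbaki_complete X d \<and>
             (\<forall>f::'a \<Rightarrow> real. CBC_regular X d UNIV dist f \<longrightarrow>
                (\<forall>s. cofinally_Bourbaki_quasi_Cauchy X d s \<longrightarrow>
                       cofinally_Bourbaki_Cauchy UNIV dist (f \<circ> s)))"
proof -
  have A: "cofinally_Bourbaki_complete X d" and
    B: "\<And>(Y::real set) dY f. Metric_space Y dY \<and> CBC_regular X d Y dY f \<Longrightarrow>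
        (\<forall>s. cofinally_Bourbaki_quasi_Cauchy X d s \<longrightarrow> cofinally_Bourbaki_Cauchy Y dY (f \<circ> s))"
    using assms unfolding cond2_def by auto
  show ?thesis
  proof (intro conjI allI impI)
    show "cofinally_Bourbaki_complete X d" by (rule A)
    fix f :: "'a \<Rightarrow> real" and s
    assume r: "CBC_regular X d UNIV dist f" and q: "cofinally_Bourbaki_quasi_Cauchy X d s"
    show "cofinally_Bourbaki_Cauchy UNIV dist (f \<circ> s)"
      using B[of UNIV dist f, OF conjI[OF Met_TC.Metric_space_axioms r]] q by simp
  qed
qed

lemma four_imp_QC:
  assumes "cofinally_Bourbaki_complete X d"
    "\<forall>s. cofinally_Bourbaki_quasi_Cauchy X d s \<longrightarrow> cofinally_Bourbaki_Cauchy X d s"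
  shows "cofinally_Bourbaki_quasi_complete X d"
  unfolding cofinally_Bourbaki_quasi_complete_def
proof (intro allI impI)
  fix s assume "cofinally_Bourbaki_quasi_Cauchy X d s"
  then have "cofinally_Bourbaki_Cauchy X d s" using assms(2) by simp
  then show "\<exists>p. seq_cluster_point X d s p"
    using assms(1) unfolding cofinally_Bourbaki_complete_def by simp
qed

theorem mainTheorem9:
  fixes X :: "'a set" and d :: "'a \<Rightarrow> 'a \<Rightarrow> real"
  assumes "Metric_space X d"
  shows "(cofinally_Bourbaki_quasi_complete X d \<longrightarrow> cond2 TYPE('b) X d)
       \<and> (cofinally_Bourbaki_quasi_complete X d \<longleftrightarrow> cond2 TYPE(real) X d)
       \<and> (cofinally_Bourbaki_quasi_complete X d \<longleftrightarrow>
            (cofinally_Bourbaki_complete X d \<and>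
             (\<forall>f::'a \<Rightarrow> real. CBC_regular X d UNIV dist f \<longrightarrow>
                (\<forall>s. cofinally_Bourbaki_quasi_Cauchy X d s \<longrightarrow>
                       cofinally_Bourbaki_Cauchy UNIV dist (f \<circ> s)))))
       \<and> (cofinally_Bourbaki_quasi_complete X d \<longleftrightarrow>
            (cofinally_Bourbaki_complete X d \<and>
             (\<forall>s. cofinally_Bourbaki_quasi_Cauchy X d s \<longrightarrow> cofinally_Bourbaki_Cauchy X d s)))"
proof (intro conjI)
  show "cofinally_Bourbaki_quasi_complete X d \<longrightarrow> cond2 TYPE('b) X d"
    by (rule QC_imp_cond2[OF assms])
  show "cofinally_Bourbaki_quasi_complete X d \<longleftrightarrow> cond2 TYPE(real) X d"
  proof
    assume "cofinally_Bourbaki_quasi_complete X d"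
    then show "cond2 TYPE(real) X d" using QC_imp_cond2[OF assms] by simp
  next
    assume "cond2 TYPE(real) X d"
    then have h: "cofinally_Bourbaki_complete X d \<and>
             (\<forall>f::'a \<Rightarrow> real. CBC_regular X d UNIV dist f \<longrightarrow>
                (\<forall>s. cofinally_Bourbaki_quasi_Cauchy X d s \<longrightarrow>
                       cofinally_Bourbaki_Cauchy UNIV dist (f \<circ> s)))"
      by (rule cond2_real_imp3)
    show "cofinally_Bourbaki_quasi_complete X d"
      using hard_dir[OF assms conjunct1[OF h] conjunct2[OF h]] .
  qed
  show "cofinally_Bourbaki_quasi_complete X d \<longleftrightarrow>
            (cofinally_Bourbaki_complete X d \<and>
             (\<forall>f::'a \<Rightarrow> real. CBC_regular X d UNIV dist f \<longrightarrow>
                (\<forall>s. cofinally_Bourbaki_quasi_Cauchy X d s \<longrightarrow>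
                       cofinally_Bourbaki_Cauchy UNIV dist (f \<circ> s))))"
  proof
    assume "cofinally_Bourbaki_quasi_complete X d"
    then have "cond2 TYPE(real) X d" using QC_imp_cond2[OF assms] by simp
    then show "cofinally_Bourbaki_complete X d \<and>
             (\<forall>f::'a \<Rightarrow> real. CBC_regular X d UNIV dist f \<longrightarrow>
                (\<forall>s. cofinally_Bourbaki_quasi_Cauchy X d s \<longrightarrow>
                       cofinally_Bourbaki_Cauchy UNIV dist (f \<circ> s)))"
      by (rule cond2_real_imp3)
  next
    assume h: "cofinally_Bourbaki_complete X d \<and>
             (\<forall>f::'a \<Rightarrow> real. CBC_regular X d UNIV dist f \<longrightarrow>
                (\<forall>s. cofinally_Bourbaki_quasi_Cauchy X d s \<longrightarrow>
                       cofinally_Bourbaki_Cauchy UNIV dist (f \<circ> s)))"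
    show "cofinally_Bourbaki_quasi_complete X d"
      using hard_dir[OF assms conjunct1[OF h] conjunct2[OF h]] .
  qed
  show "cofinally_Bourbaki_quasi_complete X d \<longleftrightarrow>
            (cofinally_Bourbaki_complete X d \<and>
             (\<forall>s. cofinally_Bourbaki_quasi_Cauchy X d s \<longrightarrow> cofinally_Bourbaki_Cauchy X d s))"
  proof
    assume Q: "cofinally_Bourbaki_quasi_complete X d"
    show "cofinally_Bourbaki_complete X d \<and>
             (\<forall>s. cofinally_Bourbaki_quasi_Cauchy X d s \<longrightarrow> cofinally_Bourbaki_Cauchy X d s)"
      using QC_imp_complete[OF assms Q] QC_imp_4[OF Q] by blast
  next
    assume h: "cofinally_Bourbaki_complete X d \<and>
             (\<forall>s. cofinally_Bourbaki_quasi_Cauchy X d s \<longrightarrow> cofinally_Bourbaki_Cauchy X d s)"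
    show "cofinally_Bourbaki_quasi_complete X d"
      using four_imp_QC[OF conjunct1[OF h] conjunct2[OF h]] .
  qed
qed

end
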